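(* Let $\Omega$ be an $n\times n$ matrix-valued measure on $\mathbb{R}$ such that $\int_{\mathbb{R}}\frac{d\Omega(y)}{1+y^{2}}\in\mathbb{C}^{n\times n}$. For $x\in\mathbb{R}$ let $T(x):=\int_{\mathbb{R}}\frac{d\Omega(y)}{(x-y)^{2}}$. Then the set $$\{x\in\operatorname{supp}\Omega : T(x)\notin\mathbb{C}^{n\times n}\}$$ is a dense $G_{\delta}$ subset of $\operatorname{supp}\Omega$ (with the relative topology).
   Context: A matrix-valued measure is a map $\Omega$ from the Borel sets of $\mathbb{R}$ to $\mathbb{C}^{n\times n}$ such that $\Omega(X)$ is positive semidefinite for each bounded Borel $X$, $\Omega(\varnothing)=0$, and $\Omega$ is countably additive on disjoint families with bounded union; $\operatorname{supp}\Omega$ is its (closed) support, i.e. the support of the trace measure $\operatorname{Tr}\Omega=\sum_i\langle e_i,\Omega(\cdot)e_i\rangle$. For a Borel function $f$, $\int_{\mathbb{R}}f\,d\Omega$ denotes the matrix associated with the sesquilinear form $(a,b)\mapsto\int_{\mathbb{R}}f(y)\,d\langle a,\Omega(y)b\rangle_{\mathbb{C}^n}$; $\int f\,d\Omega\in\mathbb{C}^{n\times n}$ means this form is defined (finite) for all $a,b\in\mathbb{C}^n$. Thus $T(x)\in\mathbb{C}^{n\times n}$ iff $\int\frac{1}{(x-y)^2}d\langle c,\Omega(y)c\rangle<\infty$ for all $c\in\mathbb{C}^n$. *)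

theory Defs
  imports "HOL-Analysis.Analysis"
begin

definition hform :: "complex^'n^'n \<Rightarrow> complex^'n \<Rightarrow> complex^'n \<Rightarrow> complex" where
  "hform M a b = (\<Sum>i\<in>UNIV. cnj (a $ i) * ((M *v b) $ i))"

definition psd_cmat :: "complex^'n^'n \<Rightarrow> bool" where
  "psd_cmat M \<longleftrightarrow> (\<forall>v. hform M v v \<in> \<real> \<and> 0 \<le> Re (hform M v v))"

text \<open>A matrix-valued measure: defined on bounded Borel sets (values on other sets are
  irrelevant), positive semidefinite, vanishing on the empty set, countably additive on
  disjoint families of Borel sets with bounded union.\<close>
definition matrix_measure :: "(real set \<Rightarrow> complex^'n^'n) \<Rightarrow> bool" where
  "matrix_measure \<Omega> \<longleftrightarrow>
     (\<forall>X \<in> sets borel. bounded X \<longrightarrow> psd_cmat (\<Omega> X)) \<and>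
     \<Omega> {} = 0 \<and>
     (\<forall>A :: nat \<Rightarrow> real set. range A \<subseteq> sets borel \<longrightarrow> disjoint_family A \<longrightarrow>
        bounded (\<Union>i. A i) \<longrightarrow> (\<lambda>m. \<Sum>i<m. \<Omega> (A i)) \<longlonglongrightarrow> \<Omega> (\<Union>i. A i))"

text \<open>The (locally finite, positive) scalar measure  X \<mapsto> <c, \<Omega>(X) c>  extended to all
  Borel sets by inner regularity along the exhaustion [-k,k].\<close>
definition qmeas :: "(real set \<Rightarrow> complex^'n^'n) \<Rightarrow> complex^'n \<Rightarrow> real measure" where
  "qmeas \<Omega> c = measure_of UNIV (sets borel)
     (\<lambda>X. SUP k::nat. ennreal (Re (hform (\<Omega> (X \<inter> {- real k .. real k})) c c)))"

definition mm_supp :: "(real set \<Rightarrow> complex^'n^'n) \<Rightarrow> real set" where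
  "mm_supp \<Omega> = {x. \<forall>e>0. trace (\<Omega> (ball x e)) \<noteq> 0}"

text \<open>\<open>\<integral> f d\<Omega> \<in> C^{n\<times>n}\<close> for nonnegative f: the form is finite on the diagonal, i.e.
  \<open>\<integral> f d<c,\<Omega> c> < \<infinity>\<close> for all c.\<close>
definition mm_integral_finite :: "(real set \<Rightarrow> complex^'n^'n) \<Rightarrow> (real \<Rightarrow> ennreal) \<Rightarrow> bool" where
  "mm_integral_finite \<Omega> f \<longleftrightarrow> (\<forall>c. (\<integral>\<^sup>+ y. f y \<partial>qmeas \<Omega> c) < \<infinity>)"

definition Tkernel :: "real \<Rightarrow> real \<Rightarrow> ennreal" where
  "Tkernel x y = (if y = x then \<infinity> else ennreal (1 / (x - y)^2))"

end

theory Submission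
  imports Defs
begin


lemma hform_expand: "hform M a b = (\<Sum>i\<in>UNIV. \<Sum>j\<in>UNIV. cnj (a$i) * M$i$j * b$j)"
  by (simp add: hform_def matrix_vector_mult_def sum_distrib_left mult.assoc)

lemma hform_add_left: "hform M (a + b) c = hform M a c + hform M b c"
  by (simp add: hform_def distrib_right sum.distrib)
lemma hform_add_right: "hform M a (b + c) = hform M a b + hform M a c"
  by (simp add: hform_def matrix_vector_right_distrib distrib_left sum.distrib)
lemma hform_diff_left: "hform M (a - b) c = hform M a c - hform M b c"
  by (simp add: hform_def left_diff_distrib sum_subtractf)
lemma hform_diff_right: "hform M a (b - c) = hform M a b - hform M a c"
  by (simp add: hform_def matrix_vector_mult_diff_distrib right_diff_distrib sum_subtractf)
lemma hform_scale: "hform M (k *s a) (k *s a) = of_real ((cmod k)^2) * hform M a a"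
proof -
  have "hform M (k *s a) (k *s a) = (cnj k * k) * hform M a a"
    by (simp add: hform_expand sum_distrib_left mult_ac)
  moreover have "cnj k * k = of_real ((cmod k)^2)"
    by (metis complex_norm_square mult.commute of_real_power)
  ultimately show ?thesis by simp
qed
lemma hform_matrix_add: "hform (M + N) a b = hform M a b + hform N a b"
  by (simp add: hform_expand distrib_left distrib_right sum.distrib)
lemma hform_zero[simp]: "hform 0 a b = 0"
  by (simp add: hform_expand)
lemma hform_zero_vec[simp]: "hform M 0 b = 0"
  by (simp add: hform_def)
lemma hform_matrix_sum: "hform (\<Sum>i\<in>F. M i) a b = (\<Sum>i\<in>F. hform (M i) a b)"
  by (induction F rule: infinite_finite_induct) (auto simp: hform_matrix_add)
lemma hform_tendsto:
  assumes "(f \<longlongrightarrow> L) F"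
  shows "((\<lambda>x. hform (f x) a b) \<longlongrightarrow> hform L a b) F"
  unfolding hform_expand
  by (intro tendsto_intros assms)
lemma mv_axis: "(M *v axis i 1) $ k = M $ k $ i"
proof -
  have "(M *v axis i 1) $ k = (\<Sum>j\<in>UNIV. if j = i then M$k$j else 0)"
    unfolding matrix_vector_mult_def vec_lambda_beta by (rule sum.cong) (auto simp: axis_def)
  then show ?thesis by simp
qed
lemma hform_axis: "hform M (axis i 1) (axis i 1) = M $ i $ i"
proof -
  have "hform M (axis i 1) (axis i 1) = (\<Sum>k\<in>UNIV. if k = i then M$k$i else 0)"
    unfolding hform_def mv_axis by (rule sum.cong) (auto simp: axis_def)
  then show ?thesis by simp
qed

definition qf :: "complex^'n^'n \<Rightarrow> complex^'n \<Rightarrow> real" where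
  "qf M c = Re (hform M c c)"

lemma psd_qf_nonneg: "psd_cmat M \<Longrightarrow> 0 \<le> qf M c"
  by (simp add: psd_cmat_def qf_def)

lemma qf_parallel: "qf M (a + b) + qf M (a - b) = 2 * qf M a + 2 * qf M b"
  by (simp add: qf_def hform_add_left hform_add_right hform_diff_left hform_diff_right)

lemma qf_add_le: "psd_cmat M \<Longrightarrow> qf M (a + b) \<le> 2 * qf M a + 2 * qf M b"
  using qf_parallel[of M a b] psd_qf_nonneg[of M "a - b"] by linarith

lemma qf_sum_le:
  assumes "psd_cmat M" "finite F"
  shows "qf M (\<Sum>i\<in>F. v i) \<le> 2 ^ card F * (\<Sum>i\<in>F. qf M (v i))"
  using assms(2)
proof (induction F rule: finite_induct)
  case empty then show ?case by (simp add: qf_def)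
next
  case (insert x F)
  have "qf M (\<Sum>i\<in>insert x F. v i) = qf M (v x + (\<Sum>i\<in>F. v i))"
    using insert by simp
  also have "\<dots> \<le> 2 * qf M (v x) + 2 * qf M (\<Sum>i\<in>F. v i)"
    by (rule qf_add_le[OF assms(1)])
  also have "\<dots> \<le> 2 * qf M (v x) + 2 * (2 ^ card F * (\<Sum>i\<in>F. qf M (v i)))"
    using insert by simp
  also have "\<dots> \<le> 2 ^ card (insert x F) * (\<Sum>i\<in>insert x F. qf M (v i))"
  proof -
    have "1 \<le> (2::real) ^ card F" by simp
    then have "2 * qf M (v x) \<le> 2 * 2 ^ card F * qf M (v x)"
      using psd_qf_nonneg[OF assms(1), of "v x"] by (simp add: mult_right_mono)
    then show ?thesis using insert by (simp add: algebra_simps)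
  qed
  finally show ?case .
qed

definition Kc :: "complex^'n \<Rightarrow> real" where
  "Kc c = 2 ^ CARD('n) * (\<Sum>j\<in>UNIV. (cmod (c$j))^2)"

lemma Kc_nonneg: "0 \<le> Kc c"
  by (simp add: Kc_def sum_nonneg)

lemma qf_bound:
  fixes M :: "complex^'n^'n" and c :: "complex^'n"
  assumes "psd_cmat M"
  shows "qf M c \<le> Kc c * (\<Sum>i\<in>UNIV. qf M (axis i 1))"
proof -
  have 1: "qf M c \<le> 2 ^ CARD('n) * (\<Sum>i\<in>UNIV. qf M ((c$i) *s axis i 1))"
    using qf_sum_le[OF assms, of "UNIV::'n set" "\<lambda>i. (c$i) *s axis i 1"] by (simp add: basis_expansion)
  have 2: "(\<Sum>i\<in>UNIV. qf M ((c$i) *s axis i 1)) = (\<Sum>i\<in>UNIV. (cmod (c$i))^2 * qf M (axis i 1))"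
    by (simp add: qf_def hform_scale)
  have 3: "(\<Sum>i\<in>UNIV. (cmod (c$i))^2 * qf M (axis i 1)) \<le> (\<Sum>i\<in>UNIV. (\<Sum>j\<in>UNIV. (cmod (c$j))^2) * qf M (axis i 1))"
  proof (intro sum_mono mult_right_mono psd_qf_nonneg[OF assms])
    fix i show "(cmod (c $ i))\<^sup>2 \<le> (\<Sum>j\<in>UNIV. (cmod (c $ j))\<^sup>2)"
      by (rule member_le_sum) auto
  qed
  have "qf M c \<le> 2 ^ CARD('n) * (\<Sum>i\<in>UNIV. (\<Sum>j\<in>UNIV. (cmod (c$j))^2) * qf M (axis i 1))"
    using 1 2 3 by (smt (verit) mult_left_mono zero_le_power)
  then show ?thesis
    by (metis (no_types) Kc_def sum_distrib_left mult.assoc)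
qed



lemma qf_madd: "qf (M + N) c = qf M c + qf N c"
  by (simp add: qf_def hform_matrix_add)
lemma qf_msum: "qf (\<Sum>i\<in>F. M i) c = (\<Sum>i\<in>F. qf (M i) c)"
  by (simp add: qf_def hform_matrix_sum)

definition Ival :: "nat \<Rightarrow> real set" where "Ival k = {- real k .. real k}"

context
  fixes \<Omega> :: "real set \<Rightarrow> complex^'n^'n"
  assumes mm: "matrix_measure \<Omega>"
begin

lemma mm_psd: "X \<in> sets borel \<Longrightarrow> bounded X \<Longrightarrow> psd_cmat (\<Omega> X)"
  using mm by (simp add: matrix_measure_def)
lemma mm_empty: "\<Omega> {} = 0"
  using mm by (simp add: matrix_measure_def)
lemma mm_sums:
  assumes "range A \<subseteq> sets borel" "disjoint_family A" "bounded (\<Union>i. A i)"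
  shows "(\<lambda>i. \<Omega> (A i)) sums \<Omega> (\<Union>i. A i)"
  using mm assms by (simp add: matrix_measure_def sums_def)

lemma mm_add:
  assumes "A \<in> sets borel" "B \<in> sets borel" "bounded A" "bounded B" "A \<inter> B = {}"
  shows "\<Omega> (A \<union> B) = \<Omega> A + \<Omega> B"
proof -
  define F where "F i = (if i = 0 then A else if i = (1::nat) then B else {})" for i
  have U: "(\<Union>i. F i) = A \<union> B"
    by (auto simp: F_def split: if_splits)
  have "range F \<subseteq> sets borel" using assms by (auto simp: F_def)
  moreover have "disjoint_family F" using assms by (auto simp: F_def disjoint_family_on_def)
  moreover have "bounded (\<Union>i. F i)" using assms U by simp
  ultimately have "(\<lambda>i. \<Omega> (F i)) sums \<Omega> (A \<union> B)" using mm_sums U by metis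
  moreover have "(\<lambda>i. \<Omega> (F i)) sums (\<Sum>i\<in>{0,1}. \<Omega> (F i))"
    by (rule sums_finite) (auto simp: F_def mm_empty)
  ultimately show ?thesis by (simp add: sums_unique2 F_def)
qed

lemma qf_nonneg: "X \<in> sets borel \<Longrightarrow> bounded X \<Longrightarrow> 0 \<le> qf (\<Omega> X) c"
  by (intro psd_qf_nonneg mm_psd)

lemma qf_mono:
  assumes "A \<subseteq> B" "A \<in> sets borel" "B \<in> sets borel" "bounded B"
  shows "qf (\<Omega> A) c \<le> qf (\<Omega> B) c"
proof -
  have bA: "bounded A" using assms bounded_subset by blast
  have "B = A \<union> (B - A)" using assms by blast
  then have "\<Omega> B = \<Omega> A + \<Omega> (B - A)"
    using mm_add[of A "B - A"] assms bA bounded_subset[of B "B - A"] by auto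
  then have "qf (\<Omega> B) c = qf (\<Omega> A) c + qf (\<Omega> (B - A)) c" by (simp add: qf_madd)
  moreover have "0 \<le> qf (\<Omega> (B - A)) c"
    using assms by (intro qf_nonneg) (auto intro: bounded_subset)
  ultimately show ?thesis by simp
qed

lemma qf_sums:
  assumes "range A \<subseteq> sets borel" "disjoint_family A" "bounded (\<Union>i. A i)"
  shows "(\<lambda>i. qf (\<Omega> (A i)) c) sums qf (\<Omega> (\<Union>i. A i)) c"
proof -
  have "(\<lambda>n. \<Sum>i<n. \<Omega> (A i)) \<longlonglongrightarrow> \<Omega> (\<Union>i. A i)"
    using mm_sums[OF assms] by (simp add: sums_def)
  from tendsto_Re[OF hform_tendsto[OF this, of c c]]
  have "(\<lambda>n. qf (\<Sum>i<n. \<Omega> (A i)) c) \<longlonglongrightarrow> qf (\<Omega> (\<Union>i. A i)) c" by (simp add: qf_def)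
  then show ?thesis by (simp add: sums_def qf_msum)
qed

definition mu :: "complex^'n \<Rightarrow> real set \<Rightarrow> ennreal" where
  "mu c X = (SUP k. ennreal (qf (\<Omega> (X \<inter> Ival k)) c))"

lemma Ival_borel[simp]: "Ival k \<in> sets borel" by (simp add: Ival_def)
lemma Ival_bounded[simp]: "bounded (Ival k)" by (simp add: Ival_def)
lemma Ival_mono: "k \<le> l \<Longrightarrow> Ival k \<subseteq> Ival l" by (auto simp: Ival_def)

lemma mu_inc: "X \<in> sets borel \<Longrightarrow> incseq (\<lambda>k. ennreal (qf (\<Omega> (X \<inter> Ival k)) c))"
  unfolding incseq_def
  by (auto intro!: ennreal_leI qf_mono bounded_Int dest: Ival_mono)

lemma mu_positive: "positive (sets borel) (mu c)"
  by (simp add: positive_def mu_def mm_empty qf_def)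

lemma mu_ca: "countably_additive (sets borel) (mu c)"
  unfolding countably_additive_def
proof (intro allI impI)
  fix A :: "nat \<Rightarrow> real set"
  assume A: "range A \<subseteq> sets borel" "disjoint_family A" "(\<Union>i. A i) \<in> sets borel"
  define f where "f k i = ennreal (qf (\<Omega> (A i \<inter> Ival k)) c)" for k i
  have "(\<Sum>i. mu c (A i)) = (\<Sum>i. SUP k. f k i)" by (simp add: mu_def f_def)
  also have "\<dots> = (SUP k. \<Sum>i. f k i)"
    using A by (intro ennreal_suminf_SUP_eq) (auto simp: f_def intro!: mu_inc)
  also have "\<dots> = (SUP k. ennreal (qf (\<Omega> ((\<Union>i. A i) \<inter> Ival k)) c))"
  proof (rule SUP_cong[OF refl])
    fix k
    have r: "range (\<lambda>i. A i \<inter> Ival k) \<subseteq> sets borel" using A by auto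
    have d: "disjoint_family (\<lambda>i. A i \<inter> Ival k)" using A(2) by (auto simp: disjoint_family_on_def)
    have u: "(\<Union>i. A i \<inter> Ival k) = (\<Union>i. A i) \<inter> Ival k" by auto
    have b: "bounded (\<Union>i. A i \<inter> Ival k)" unfolding u by (simp add: bounded_Int)
    have s: "(\<lambda>i. qf (\<Omega> (A i \<inter> Ival k)) c) sums qf (\<Omega> ((\<Union>i. A i) \<inter> Ival k)) c"
      using qf_sums[OF r d b] u by simp
    have nn: "\<And>i. 0 \<le> qf (\<Omega> (A i \<inter> Ival k)) c" using A by (auto intro!: qf_nonneg simp: bounded_Int)
    show "(\<Sum>i. f k i) = ennreal (qf (\<Omega> ((\<Union>i. A i) \<inter> Ival k)) c)"
      unfolding f_def using suminf_ennreal2[OF nn sums_summable[OF s]] sums_unique[OF s] by simp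
  qed
  also have "\<dots> = mu c (\<Union>i. A i)" by (simp add: mu_def)
  finally show "(\<Sum>i. mu c (A i)) = mu c (\<Union>i. A i)" .
qed

lemma qmeas_eq: "qmeas \<Omega> c = measure_of UNIV (sets borel) (mu c)"
proof -
  have "mu c = (\<lambda>X. SUP k::nat. ennreal (Re (hform (\<Omega> (X \<inter> {- real k .. real k})) c c)))"
    by (rule ext) (simp add: mu_def qf_def Ival_def)
  then show ?thesis by (simp add: qmeas_def)
qed

lemma sets_qmeas[simp, measurable_cong]: "sets (qmeas \<Omega> c) = sets borel"
  by (simp add: qmeas_eq sets.sigma_sets_eq[of borel, simplified])

lemma space_qmeas[simp]: "space (qmeas \<Omega> c) = UNIV"
  by (simp add: qmeas_eq)

lemma emeasure_qmeas: "X \<in> sets borel \<Longrightarrow> emeasure (qmeas \<Omega> c) X = mu c X"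
  unfolding qmeas_eq
  by (rule emeasure_measure_of_sigma)
     (auto simp: mu_positive mu_ca sets.sigma_algebra_axioms[of borel, simplified])

lemma emeasure_qmeas_bounded:
  assumes "X \<in> sets borel" "bounded X"
  shows "emeasure (qmeas \<Omega> c) X = ennreal (qf (\<Omega> X) c)"
proof -
  obtain r where r: "\<And>x. x \<in> X \<Longrightarrow> \<bar>x\<bar> \<le> r"
    using assms(2) by (metis bounded_real)
  obtain k :: nat where k: "r \<le> real k" using real_arch_simple by blast
  have Xk: "X \<inter> Ival k = X" using r k by (force simp: Ival_def abs_le_iff)
  have "mu c X = ennreal (qf (\<Omega> X) c)"
    unfolding mu_def
  proof (rule antisym)
    show "(SUP k. ennreal (qf (\<Omega> (X \<inter> Ival k)) c)) \<le> ennreal (qf (\<Omega> X) c)"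
      using assms by (auto intro!: SUP_least ennreal_leI qf_mono)
    show "ennreal (qf (\<Omega> X) c) \<le> (SUP k. ennreal (qf (\<Omega> (X \<inter> Ival k)) c))"
      by (rule SUP_upper2[of k]) (auto simp: Xk)
  qed
  then show ?thesis using emeasure_qmeas[OF assms(1)] by simp
qed

lemma emeasure_qmeas_cmp:
  assumes "X \<in> sets borel"
  shows "emeasure (qmeas \<Omega> c) X \<le> ennreal (Kc c) * (\<Sum>i\<in>UNIV. emeasure (qmeas \<Omega> (axis i 1)) X)"
proof -
  have "mu c X \<le> ennreal (Kc c) * (\<Sum>i\<in>UNIV. mu (axis i 1) X)"
    unfolding mu_def
  proof (rule SUP_least)
    fix k
    have XI: "X \<inter> Ival k \<in> sets borel" "bounded (X \<inter> Ival k)" using assms by (auto simp: bounded_Int)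
    have "ennreal (qf (\<Omega> (X \<inter> Ival k)) c) \<le> ennreal (Kc c * (\<Sum>i\<in>UNIV. qf (\<Omega> (X \<inter> Ival k)) (axis i 1)))"
      by (intro ennreal_leI qf_bound mm_psd XI)
    also have "\<dots> = ennreal (Kc c) * (\<Sum>i\<in>UNIV. ennreal (qf (\<Omega> (X \<inter> Ival k)) (axis i 1)))"
      using XI by (simp add: ennreal_mult Kc_nonneg sum_nonneg qf_nonneg )
    also have "\<dots> \<le> ennreal (Kc c) * (\<Sum>i\<in>UNIV. SUP k. ennreal (qf (\<Omega> (X \<inter> Ival k)) (axis i 1)))"
      by (intro mult_left_mono sum_mono SUP_upper) auto
    finally show "ennreal (qf (\<Omega> (X \<inter> Ival k)) c) \<le> ennreal (Kc c) * (\<Sum>i\<in>UNIV. SUP k. ennreal (qf (\<Omega> (X \<inter> Ival k)) (axis i 1)))" .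
  qed
  then show ?thesis using assms by (simp add: emeasure_qmeas)
qed

end


lemma meas_borel: "sets M = sets borel \<Longrightarrow> f \<in> borel_measurable borel \<Longrightarrow> f \<in> borel_measurable M"
  by (subst measurable_cong_sets[where M=M and M'=borel and N=borel and N'=borel]) auto

lemma nn_integral_cmp:
  fixes M :: "real measure" and N :: "'i \<Rightarrow> real measure"
  assumes sM: "sets M = sets borel" and sN: "\<And>i. sets (N i) = sets borel" and fI: "finite I"
    and le: "\<And>A. A \<in> sets borel \<Longrightarrow> emeasure M A \<le> K * (\<Sum>i\<in>I. emeasure (N i) A)"
    and f: "f \<in> borel_measurable borel"
  shows "(\<integral>\<^sup>+x. f x \<partial>M) \<le> K * (\<Sum>i\<in>I. \<integral>\<^sup>+x. f x \<partial>N i)"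
  using f
proof (induction rule: borel_measurable_induct)
  case (cong f g)
  then have "f = g" by auto
  then show ?case using cong by simp
next
  case (set A)
  have "A \<in> sets M" "\<And>i. A \<in> sets (N i)" using set sM sN by auto
  then show ?case using le[OF set] by simp
next
  case (mult u c)
  have mM: "u \<in> borel_measurable M" using mult meas_borel[OF sM] by simp
  have mN: "\<And>i. u \<in> borel_measurable (N i)" using mult meas_borel[OF sN] by simp
  have "(\<integral>\<^sup>+x. c * u x \<partial>M) = c * (\<integral>\<^sup>+x. u x \<partial>M)" by (rule nn_integral_cmult[OF mM])
  also have "\<dots> \<le> c * (K * (\<Sum>i\<in>I. \<integral>\<^sup>+x. u x \<partial>N i))" using mult by (intro mult_left_mono) auto
  also have "\<dots> = K * (\<Sum>i\<in>I. \<integral>\<^sup>+x. c * u x \<partial>N i)"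
    by (simp add: nn_integral_cmult[OF mN] sum_distrib_left mult_ac)
  finally show ?case .
next
  case (add u v)
  have mM: "u \<in> borel_measurable M" "v \<in> borel_measurable M" using add meas_borel[OF sM] by simp_all
  have mN: "\<And>i. u \<in> borel_measurable (N i)" "\<And>i. v \<in> borel_measurable (N i)"
    using add meas_borel[OF sN] by simp_all
  have "(\<integral>\<^sup>+x. v x + u x \<partial>M) = (\<integral>\<^sup>+x. v x \<partial>M) + (\<integral>\<^sup>+x. u x \<partial>M)"
    by (rule nn_integral_add) (use mM in auto)
  also have "\<dots> \<le> K * (\<Sum>i\<in>I. \<integral>\<^sup>+x. v x \<partial>N i) + K * (\<Sum>i\<in>I. \<integral>\<^sup>+x. u x \<partial>N i)"
    using add by (intro add_mono) auto
  also have "\<dots> = K * (\<Sum>i\<in>I. \<integral>\<^sup>+x. v x + u x \<partial>N i)"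
    by (simp add: nn_integral_add mN distrib_left sum.distrib)
  finally show ?case .
next
  case (seq U)
  have mM: "\<And>i. U i \<in> borel_measurable M" using seq by (intro meas_borel[OF sM]) auto
  have mN: "\<And>i j. U i \<in> borel_measurable (N j)" using seq by (intro meas_borel[OF sN]) auto
  have "(\<integral>\<^sup>+x. (SUP i. U i) x \<partial>M) = (SUP i. \<integral>\<^sup>+x. U i x \<partial>M)"
    unfolding SUP_apply by (rule nn_integral_monotone_convergence_SUP[OF \<open>incseq U\<close> mM])
  also have "\<dots> \<le> K * (\<Sum>j\<in>I. \<integral>\<^sup>+x. (SUP i. U i) x \<partial>N j)"
  proof (rule SUP_least)
    fix i
    have "(\<integral>\<^sup>+x. U i x \<partial>M) \<le> K * (\<Sum>j\<in>I. \<integral>\<^sup>+x. U i x \<partial>N j)" using seq by simp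
    also have "\<dots> \<le> K * (\<Sum>j\<in>I. \<integral>\<^sup>+x. (SUP i. U i) x \<partial>N j)"
      by (intro mult_left_mono sum_mono nn_integral_mono) (auto simp: SUP_apply intro: SUP_upper)
    finally show "(\<integral>\<^sup>+x. U i x \<partial>M) \<le> K * (\<Sum>j\<in>I. \<integral>\<^sup>+x. (SUP i. U i) x \<partial>N j)" .
  qed
  finally show ?case .
qed

lemma Tkernel_alt: "Tkernel x y = inverse (ennreal ((x - y)^2))"
proof (cases "y = x")
  case True then show ?thesis by (simp add: Tkernel_def)
next
  case False
  then have "0 < (x - y)^2" by simp
  then show ?thesis using False by (simp add: Tkernel_def inverse_ennreal divide_inverse)
qed

lemma Tkernel_cont_x: "continuous_on UNIV (\<lambda>x. Tkernel x y)"
  unfolding Tkernel_alt by (intro continuous_intros continuous_on_ennreal)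

lemma Tkernel_cont_y: "continuous_on UNIV (\<lambda>y. Tkernel x y)"
  unfolding Tkernel_alt by (intro continuous_intros continuous_on_ennreal)

lemma Tkernel_meas[measurable]: "Tkernel x \<in> borel_measurable borel"
  using borel_measurable_continuous_onI[OF Tkernel_cont_y[of x]] by simp

lemma open_lsc:
  fixes M :: "real measure"
  assumes sM: "sets M = sets borel"
  shows "open {x. m < (\<integral>\<^sup>+y. Tkernel x y \<partial>M)}"
proof -
  have mM: "\<And>x. Tkernel x \<in> borel_measurable M" by (intro meas_borel[OF sM] Tkernel_meas)
  have "closed {x. (\<integral>\<^sup>+y. Tkernel x y \<partial>M) \<le> m}"
    unfolding closed_sequential_limits
  proof (intro allI impI, elim conjE)
    fix X :: "nat \<Rightarrow> real" and l
    assume X: "\<forall>n. X n \<in> {x. (\<integral>\<^sup>+y. Tkernel x y \<partial>M) \<le> m}" and l: "X \<longlonglongrightarrow> l"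
    have pt: "liminf (\<lambda>n. Tkernel (X n) y) = Tkernel l y" for y
    proof (rule lim_imp_Liminf)
      show "(\<lambda>n. Tkernel (X n) y) \<longlonglongrightarrow> Tkernel l y"
        using isCont_tendsto_compose[OF _ l, of "\<lambda>x. Tkernel x y"] Tkernel_cont_x[of y]
        by (simp add: continuous_on_eq_continuous_at)
    qed simp
    have "(\<integral>\<^sup>+y. Tkernel l y \<partial>M) = (\<integral>\<^sup>+y. liminf (\<lambda>n. Tkernel (X n) y) \<partial>M)"
      by (simp add: pt)
    also have "\<dots> \<le> liminf (\<lambda>n. \<integral>\<^sup>+y. Tkernel (X n) y \<partial>M)"
      by (rule nn_integral_liminf) (simp add: mM)
    also have "\<dots> \<le> m"
      by (rule Liminf_le) (use X in auto)
    finally show "l \<in> {x. (\<integral>\<^sup>+y. Tkernel x y \<partial>M) \<le> m}" by simp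
  qed
  then have "open (- {x. (\<integral>\<^sup>+y. Tkernel x y \<partial>M) \<le> m})" by (simp add: closed_def)
  moreover have "- {x. (\<integral>\<^sup>+y. Tkernel x y \<partial>M) \<le> m} = {x. m < (\<integral>\<^sup>+y. Tkernel x y \<partial>M)}"
    by (auto simp: not_le)
  ultimately show ?thesis by simp
qed



lemma bisect:
  fixes M :: "real measure"
  assumes sM: "sets M = sets borel" and fin: "\<And>a b. emeasure M {a..b} \<noteq> \<infinity>"
    and ab: "a < b" and pos: "0 < emeasure M {a..b}"
  shows "\<exists>y\<in>{a..b}. (\<forall>r>0. 0 < emeasure M (ball y r)) \<and> (\<integral>\<^sup>+t. Tkernel y t \<partial>M) = \<infinity>"
proof -
  define v where "v p = measure M {fst p..snd p}" for p :: "real \<times> real"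
  define step where "step p = (let m = (fst p + snd p)/2 in
      if v p \<le> 2 * measure M {fst p..m} then (fst p, m) else (m, snd p))" for p :: "real \<times> real"
  define I where "I k = (step ^^ k) (a,b)" for k
  have IS: "I (Suc k) = step (I k)" for k by (simp add: I_def)
  have sub: "v p \<le> measure M {fst p..(fst p + snd p)/2} + measure M {(fst p + snd p)/2..snd p}"
    if "fst p \<le> snd p" for p
  proof -
    have "{fst p..snd p} = {fst p..(fst p + snd p)/2} \<union> {(fst p + snd p)/2..snd p}"
      using that by auto
    then have "v p = measure M ({fst p..(fst p + snd p)/2} \<union> {(fst p + snd p)/2..snd p})"
      unfolding v_def by simp
    also have "\<dots> \<le> measure M {fst p..(fst p + snd p)/2} + measure M {(fst p + snd p)/2..snd p}"
      by (rule measure_Un_le) (auto simp: sM)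
    finally show ?thesis .
  qed
  have inv: "fst (I k) \<le> snd (I k) \<and> snd (I k) - fst (I k) = (b - a) / 2^k \<and> v (a,b) \<le> 2^k * v (I k)
      \<and> fst (I k) \<le> fst (I (Suc k)) \<and> snd (I (Suc k)) \<le> snd (I k)" for k
  proof (induction k)
    case 0
    have "fst (I 0) \<le> fst (I (Suc 0)) \<and> snd (I (Suc 0)) \<le> snd (I 0)"
      using ab by (simp add: I_def step_def Let_def)
    then show ?case using ab by (simp add: I_def)
  next
    case (Suc k)
    obtain c d where cd: "I k = (c, d)" by force
    have IH: "c \<le> d" "d - c = (b - a) / 2^k" "v (a,b) \<le> 2^k * v (c,d)" using Suc cd by auto
    have s: "v (c,d) \<le> measure M {c..(c+d)/2} + measure M {(c+d)/2..d}" using sub[of "(c,d)"] IH by simp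
    have I1: "fst (I (Suc k)) \<le> snd (I (Suc k)) \<and> snd (I (Suc k)) - fst (I (Suc k)) = (b - a) / 2^Suc k
       \<and> v (a,b) \<le> 2^Suc k * v (I (Suc k))"
    proof -
    have len: "(c+d)/2 - c = (b - a) / 2^Suc k" "d - (c+d)/2 = (b - a) / 2^Suc k"
      using IH(2) by (simp_all add: field_simps)
    have pk: "(0::real) \<le> 2^k" by simp
    show ?thesis
    proof (cases "v (c,d) \<le> 2 * measure M {c..(c+d)/2}")
      case True
      then have e: "I (Suc k) = (c, (c+d)/2)" by (simp add: IS cd step_def Let_def)
      have "v (a,b) \<le> 2^k * (2 * measure M {c..(c+d)/2})"
        using IH(3) mult_left_mono[OF True pk] by linarith
      moreover have "2^Suc k * v (c, (c+d)/2) = 2^k * (2 * measure M {c..(c+d)/2})" by (simp add: v_def)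
      ultimately have vv: "v (a,b) \<le> 2^Suc k * v (c, (c+d)/2)" by linarith
      show ?thesis unfolding e fst_conv snd_conv
      proof (intro conjI)
        show "c \<le> (c+d)/2" using IH(1) by simp
      qed (rule len(1), rule vv)
    next
      case False
      then have e: "I (Suc k) = ((c+d)/2, d)" by (simp add: IS cd step_def Let_def)
      have "v (c,d) \<le> 2 * v ((c+d)/2, d)" using False s by (simp add: v_def)
      then have "v (a,b) \<le> 2^k * (2 * v ((c+d)/2, d))"
        using IH(3) mult_left_mono[OF _ pk] by (meson order_trans)
      moreover have "2^Suc k * v ((c+d)/2, d) = 2^k * (2 * v ((c+d)/2, d))" by simp
      ultimately have vv: "v (a,b) \<le> 2^Suc k * v ((c+d)/2, d)" by linarith
      show ?thesis unfolding e fst_conv snd_conv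
      proof (intro conjI)
        show "(c+d)/2 \<le> d" using IH(1) by simp
      qed (rule len(2), rule vv)
    qed
  qed
    have I2: "fst (I (Suc k)) \<le> fst (I (Suc (Suc k))) \<and> snd (I (Suc (Suc k))) \<le> snd (I (Suc k))"
    proof -
      obtain c' d' where cd': "I (Suc k) = (c', d')" by force
      have "c' \<le> d'" using I1 cd' by simp
      then show ?thesis using cd' by (simp add: IS step_def Let_def)
    qed
    show ?case using I1 I2 by simp
  qed
  have incf: "incseq (\<lambda>k. fst (I k))" using inv by (intro incseq_SucI) auto
  have decs: "decseq (\<lambda>k. snd (I k))" using inv by (intro decseq_SucI) auto
  have fs: "fst (I k) \<le> snd (I j)" for k j
  proof (cases "k \<le> j")
    case True then show ?thesis using incseqD[OF incf True] inv[of j] by linarith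
  next
    case False then have jk: "j \<le> k" by simp
    show ?thesis using decseqD[OF decs jk] inv[of k] by linarith
  qed
  define y where "y = Sup (range (\<lambda>k. fst (I k)))"
  have bdd: "bdd_above (range (\<lambda>k. fst (I k)))" using fs by (intro bdd_aboveI2) blast
  have yl: "fst (I k) \<le> y" for k unfolding y_def using bdd by (intro cSup_upper) auto
  have yu: "y \<le> snd (I k)" for k unfolding y_def using fs by (intro cSup_least) auto
  have I0: "I 0 = (a, b)" by (simp add: I_def)
  have yab: "y \<in> {a..b}" using yl[of 0] yu[of 0] I0 by simp
  have v0: "0 < v (a,b)"
  proof -
    have "emeasure M {a..b} = ennreal (v (a,b))" using fin by (simp add: v_def emeasure_eq_ennreal_measure)
    then show ?thesis using pos by simp
  qed
  have vI: "v (a,b) / 2^k \<le> v (I k)" for k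
    using inv[of k] by (simp add: field_simps mult.commute)
  have emI: "emeasure M {fst (I k)..snd (I k)} = ennreal (v (I k))" for k
    using fin by (simp add: v_def emeasure_eq_ennreal_measure)
  have ball_pos: "0 < emeasure M (ball y r)" if r: "r > 0" for r
  proof -
    obtain k where k: "(b - a) / r < 2^k" using real_arch_pow[of 2 "(b - a)/r"] by auto
    then have len: "(b - a) / 2^k < r" using r by (simp add: field_simps)
    have "{fst (I k)..snd (I k)} \<subseteq> ball y r"
    proof
      fix t assume t: "t \<in> {fst (I k)..snd (I k)}"
      have "\<bar>y - t\<bar> \<le> snd (I k) - fst (I k)" using t yl[of k] yu[of k] by auto
      then show "t \<in> ball y r" using inv[of k] len by (simp add: dist_real_def)
    qed
    then have "emeasure M {fst (I k)..snd (I k)} \<le> emeasure M (ball y r)"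
      by (intro emeasure_mono) (auto simp: sM)
    moreover have "0 < v (a,b) / 2^k" using v0 by simp
    then have "0 < v (I k)" using vI[of k] by linarith
    then have "0 < emeasure M {fst (I k)..snd (I k)}" using emI[of k] by simp
    ultimately show ?thesis by (rule order_less_le_trans[rotated])
  qed
  have lower: "ennreal (v (a,b) * 2^k / (b - a)^2) \<le> (\<integral>\<^sup>+t. Tkernel y t \<partial>M)" for k
  proof -
    define l where "l = (b - a) / 2^k"
    have l: "0 < l" "snd (I k) - fst (I k) = l" using ab inv[of k] by (auto simp: l_def)
    have pt: "ennreal (1 / l^2) * indicator {fst (I k)..snd (I k)} t \<le> Tkernel y t" for t
    proof (cases "t \<in> {fst (I k)..snd (I k)}")
      case True
      show ?thesis
      proof (cases "t = y")
        case True then show ?thesis by (simp add: Tkernel_def)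
      next
        case False
        have "\<bar>y - t\<bar> \<le> l" using True yl[of k] yu[of k] l by auto
        then have "(y - t)^2 \<le> l^2" by (metis abs_le_square_iff abs_of_pos l(1) power2_abs)
        moreover have "0 < (y - t)^2" using False by simp
        ultimately have "1 / l^2 \<le> 1 / (y - t)^2" by (simp add: frac_le)
        then show ?thesis using True False by (simp add: Tkernel_def ennreal_leI)
      qed
    qed simp
    have "ennreal (1 / l^2) * emeasure M {fst (I k)..snd (I k)} = (\<integral>\<^sup>+t. ennreal (1 / l^2) * indicator {fst (I k)..snd (I k)} t \<partial>M)"
      by (rule nn_integral_cmult_indicator[symmetric]) (simp add: sM)
    also have "\<dots> \<le> (\<integral>\<^sup>+t. Tkernel y t \<partial>M)" by (intro nn_integral_mono pt)
    finally have A0: "ennreal (1 / l^2) * emeasure M {fst (I k)..snd (I k)} \<le> (\<integral>\<^sup>+t. Tkernel y t \<partial>M)" .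
    have nn: "0 \<le> v (I k)" by (simp add: v_def)
    have eq: "ennreal (1 / l^2 * v (I k)) = ennreal (1 / l^2) * ennreal (v (I k))"
      using nn by (intro ennreal_mult) auto
    have A: "ennreal (1 / l^2 * v (I k)) \<le> (\<integral>\<^sup>+t. Tkernel y t \<partial>M)"
      unfolding eq using A0 unfolding emI[of k] .
    have "v (a,b) * 2^k / (b - a)^2 = 1 / l^2 * (v (a,b) / 2^k)"
      by (simp add: l_def power_divide field_simps power_mult_distrib) (simp add: power2_eq_square power_mult[symmetric] mult.commute)
    also have "\<dots> \<le> 1 / l^2 * v (I k)" using vI[of k] l by (intro mult_left_mono) auto
    finally show ?thesis using A by (meson ennreal_leI order_trans)
  qed
  have inf: "(\<integral>\<^sup>+t. Tkernel y t \<partial>M) = \<infinity>"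
  proof (rule ccontr)
    assume "(\<integral>\<^sup>+t. Tkernel y t \<partial>M) \<noteq> \<infinity>"
    then obtain R where R: "(\<integral>\<^sup>+t. Tkernel y t \<partial>M) = ennreal R" "0 \<le> R"
      by (metis infinity_ennreal_def less_top_ennreal top.not_eq_extremum)
    obtain k where k: "R * (b - a)^2 / v (a,b) < 2^k" using real_arch_pow[of 2] by auto
    have "v (a,b) * 2^k / (b - a)^2 \<le> R" using lower[of k] R by (simp add: ennreal_le_iff)
    then show False using k v0 ab by (simp add: field_simps)
  qed
  show ?thesis using yab ball_pos inf by blast
qed



context
  fixes \<Omega> :: "real set \<Rightarrow> complex^'n^'n"
  assumes mm: "matrix_measure \<Omega>"
begin

lemma trace_ne:
  assumes "X \<in> sets borel" "bounded X"
  shows "trace (\<Omega> X) \<noteq> 0 \<longleftrightarrow> (\<exists>i. 0 < qf (\<Omega> X) (axis i 1))"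
proof
  have psd: "psd_cmat (\<Omega> X)" using mm_psd[OF mm assms] .
  assume tr: "trace (\<Omega> X) \<noteq> 0"
  show "\<exists>i. 0 < qf (\<Omega> X) (axis i 1)"
  proof (rule ccontr)
    assume "\<not> ?thesis"
    then have z: "qf (\<Omega> X) (axis i 1) = 0" for i
      using psd_qf_nonneg[OF psd, of "axis i 1"] by (meson not_less order_antisym)
    have "\<Omega> X $ i $ i = 0" for i
    proof -
      have "hform (\<Omega> X) (axis i 1) (axis i 1) \<in> \<real>" using psd by (simp add: psd_cmat_def)
      then obtain r where r: "\<Omega> X $ i $ i = of_real r" by (auto simp: hform_axis elim: Reals_cases)
      have "Re (\<Omega> X $ i $ i) = 0" using z[of i] by (simp add: qf_def hform_axis)
      then show ?thesis using r by simp
    qed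
    then have "trace (\<Omega> X) = 0" by (simp add: trace_def)
    then show False using tr by simp
  qed
next
  have psd: "psd_cmat (\<Omega> X)" using mm_psd[OF mm assms] .
  assume "\<exists>i. 0 < qf (\<Omega> X) (axis i 1)"
  then obtain i where i: "0 < qf (\<Omega> X) (axis i 1)" by blast
  have "Re (trace (\<Omega> X)) = (\<Sum>j\<in>UNIV. qf (\<Omega> X) (axis j 1))"
    by (simp add: trace_def qf_def hform_axis)
  also have "\<dots> \<ge> qf (\<Omega> X) (axis i 1)"
    by (rule member_le_sum) (auto intro: psd_qf_nonneg[OF psd])
  finally show "trace (\<Omega> X) \<noteq> 0" using i by auto
qed

lemma not_finite_iff:
  "\<not> mm_integral_finite \<Omega> (Tkernel x) \<longleftrightarrow>
     (\<exists>i. (\<integral>\<^sup>+y. Tkernel x y \<partial>qmeas \<Omega> (axis i 1)) = \<infinity>)"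
proof
  assume "\<not> mm_integral_finite \<Omega> (Tkernel x)"
  then obtain c where c: "\<not> (\<integral>\<^sup>+y. Tkernel x y \<partial>qmeas \<Omega> c) < \<infinity>"
    by (auto simp: mm_integral_finite_def)
  have "(\<integral>\<^sup>+y. Tkernel x y \<partial>qmeas \<Omega> c) \<le> ennreal (Kc c) * (\<Sum>i\<in>UNIV. \<integral>\<^sup>+y. Tkernel x y \<partial>qmeas \<Omega> (axis i 1))"
    by (rule nn_integral_cmp) (auto simp: sets_qmeas[OF mm] emeasure_qmeas_cmp[OF mm])
  show "\<exists>i. (\<integral>\<^sup>+y. Tkernel x y \<partial>qmeas \<Omega> (axis i 1)) = \<infinity>"
  proof (rule ccontr)
    assume "\<not> ?thesis"
    then have "(\<Sum>i\<in>UNIV. \<integral>\<^sup>+y. Tkernel x y \<partial>qmeas \<Omega> (axis i 1)) < \<infinity>"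
      by (simp add: less_top[symmetric])
    then have "ennreal (Kc c) * (\<Sum>i\<in>UNIV. \<integral>\<^sup>+y. Tkernel x y \<partial>qmeas \<Omega> (axis i 1)) < \<infinity>"
      by (simp add: ennreal_mult_less_top)
    then show False using c \<open>(\<integral>\<^sup>+y. Tkernel x y \<partial>qmeas \<Omega> c) \<le> _\<close> by (meson le_less_trans)
  qed
next
  assume "\<exists>i. (\<integral>\<^sup>+y. Tkernel x y \<partial>qmeas \<Omega> (axis i 1)) = \<infinity>"
  then show "\<not> mm_integral_finite \<Omega> (Tkernel x)"
    unfolding mm_integral_finite_def by (metis less_irrefl)
qed

definition G :: "'n \<Rightarrow> real \<Rightarrow> ennreal" where
  "G i x = (\<integral>\<^sup>+y. Tkernel x y \<partial>qmeas \<Omega> (axis i 1))"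

definition U :: "nat \<Rightarrow> real set" where
  "U m = (\<Union>i. {x. of_nat m < G i x})"

lemma U_open: "open (U m)"
  unfolding U_def G_def
  by (intro open_UN ballI open_lsc) (simp add: sets_qmeas[OF mm])

lemma U_inter: "x \<in> (\<Inter>m. U m) \<longleftrightarrow> (\<exists>i. G i x = \<infinity>)"
proof
  assume x: "x \<in> (\<Inter>m. U m)"
  show "\<exists>i. G i x = \<infinity>"
  proof (rule ccontr)
    assume "\<not> ?thesis"
    then have "(\<Sum>i\<in>UNIV. G i x) < top" by (simp add: less_top[symmetric])
    then obtain m where m: "(\<Sum>i\<in>UNIV. G i x) < of_nat m" using ennreal_Ex_less_of_nat by blast
    from x have "x \<in> U m" by blast
    then obtain i where "of_nat m < G i x" by (auto simp: U_def)
    moreover have "G i x \<le> (\<Sum>i\<in>UNIV. G i x)" by (rule member_le_sum) auto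
    ultimately show False using m by simp
  qed
next
  assume "\<exists>i. G i x = \<infinity>"
  then obtain i where i: "G i x = \<infinity>" by blast
  show "x \<in> (\<Inter>m. U m)" unfolding U_def using i by (auto intro!: exI[of _ i] simp: of_nat_less_top)
qed

lemma dense:
  assumes x: "x \<in> mm_supp \<Omega>" and e: "0 < e"
  shows "\<exists>y. y \<in> mm_supp \<Omega> \<and> \<not> mm_integral_finite \<Omega> (Tkernel y) \<and> y \<in> ball x e"
proof -
  have "trace (\<Omega> (ball x (e/2))) \<noteq> 0" using x e by (simp add: mm_supp_def)
  then obtain i where i: "0 < qf (\<Omega> (ball x (e/2))) (axis i 1)"
    using trace_ne[of "ball x (e/2)"] by auto
  define M where "M = qmeas \<Omega> (axis i 1)"
  have sM: "sets M = sets borel" by (simp add: M_def sets_qmeas[OF mm])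
  have fin: "emeasure M {a..b} \<noteq> \<infinity>" for a b
    by (simp add: M_def emeasure_qmeas_bounded[OF mm])
  have "0 < emeasure M (ball x (e/2))"
    using i by (simp add: M_def emeasure_qmeas_bounded[OF mm])
  also have "\<dots> \<le> emeasure M {x - e/2 .. x + e/2}"
    by (rule emeasure_mono) (use ball_subset_cball[of x "e/2"] in \<open>auto simp: sM cball_eq_atLeastAtMost\<close>)
  finally have pos: "0 < emeasure M {x - e/2 .. x + e/2}" .
  obtain y where y: "y \<in> {x - e/2 .. x + e/2}" and yb: "\<forall>r>0. 0 < emeasure M (ball y r)"
    and yi: "(\<integral>\<^sup>+t. Tkernel y t \<partial>M) = \<infinity>"
    using bisect[OF sM fin _ pos] e by auto
  have "y \<in> mm_supp \<Omega>"
    unfolding mm_supp_def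
  proof (intro CollectI allI impI)
    fix r :: real assume r: "r > 0"
    have "0 < emeasure M (ball y r)" using yb r by blast
    then have "0 < qf (\<Omega> (ball y r)) (axis i 1)"
      by (simp add: M_def emeasure_qmeas_bounded[OF mm])
    then show "trace (\<Omega> (ball y r)) \<noteq> 0" using trace_ne[of "ball y r"] by auto
  qed
  moreover have "\<not> mm_integral_finite \<Omega> (Tkernel y)"
    using yi unfolding mm_integral_finite_def M_def by (metis less_irrefl)
  moreover have "y \<in> ball x e" using y e by (auto simp: dist_real_def)
  ultimately show ?thesis by blast
qed

end


theorem theorem3p9:
  fixes \<Omega> :: "real set \<Rightarrow> complex^'n^'n"
  assumes "matrix_measure \<Omega>"
    and "mm_integral_finite \<Omega> (\<lambda>y. ennreal (1 / (1 + y^2)))"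
  defines "S \<equiv> {x \<in> mm_supp \<Omega>. \<not> mm_integral_finite \<Omega> (Tkernel x)}"
  shows "gdelta_in (top_of_set (mm_supp \<Omega>)) S
       \<and> (top_of_set (mm_supp \<Omega>)) closure_of S = mm_supp \<Omega>"
proof
  note mm = assms(1)
  have Seq: "S = mm_supp \<Omega> \<inter> (\<Inter>m. U \<Omega> m)"
  proof -
    have "x \<in> S \<longleftrightarrow> x \<in> mm_supp \<Omega> \<and> x \<in> (\<Inter>m. U \<Omega> m)" for x
      unfolding S_def mem_Collect_eq not_finite_iff[OF mm] U_inter[OF mm] by (simp add: G_def[OF mm])
    then show ?thesis by blast
  qed
  show "gdelta_in (top_of_set (mm_supp \<Omega>)) S"
    unfolding gdelta_in_alt
  proof
    show "S \<subseteq> topspace (top_of_set (mm_supp \<Omega>))" by (auto simp: S_def)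
    show "(countable intersection_of openin (top_of_set (mm_supp \<Omega>))) S"
      unfolding intersection_of_def
    proof (intro exI conjI)
      show "countable (range (\<lambda>m. mm_supp \<Omega> \<inter> U \<Omega> m))" by simp
      show "range (\<lambda>m. mm_supp \<Omega> \<inter> U \<Omega> m) \<subseteq> Collect (openin (top_of_set (mm_supp \<Omega>)))"
        using U_open[OF mm] by (auto intro: openin_open_Int)
      show "\<Inter> (range (\<lambda>m. mm_supp \<Omega> \<inter> U \<Omega> m)) = S" unfolding Seq by auto
    qed
  qed
  show "(top_of_set (mm_supp \<Omega>)) closure_of S = mm_supp \<Omega>"
  proof (rule antisym)
    show "(top_of_set (mm_supp \<Omega>)) closure_of S \<subseteq> mm_supp \<Omega>"
      using closure_of_subset_topspace[of "top_of_set (mm_supp \<Omega>)" S] by simp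
    show "mm_supp \<Omega> \<subseteq> (top_of_set (mm_supp \<Omega>)) closure_of S"
    proof
      fix x assume x: "x \<in> mm_supp \<Omega>"
      show "x \<in> (top_of_set (mm_supp \<Omega>)) closure_of S"
        unfolding closure_of_def
      proof (intro CollectI conjI allI impI)
        show "x \<in> topspace (top_of_set (mm_supp \<Omega>))" using x by simp
        fix T assume T: "x \<in> T \<and> openin (top_of_set (mm_supp \<Omega>)) T"
        then obtain V where V: "open V" "T = mm_supp \<Omega> \<inter> V" by (auto simp: openin_open)
        then have "x \<in> V" using T by blast
        then obtain e where e: "e > 0" "ball x e \<subseteq> V" using V(1) open_contains_ball by blast
        obtain y where y: "y \<in> mm_supp \<Omega>" "\<not> mm_integral_finite \<Omega> (Tkernel y)" "y \<in> ball x e"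
          using dense[OF mm x e(1)] by blast
        show "\<exists>y\<in>S. y \<in> T" using y e V by (auto simp: S_def)
      qed
    qed
  qed
qed


end
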